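(* Let $G$ be a finite graph and $D$ a divisor on $G$. Then $\bigoplus_{m=0}^\infty R(G,mD)$ is finitely generated as a graded semi-ring over ${\mathbb{Z}}^{\mathrm{trop}}$.
   Context: A finite graph $G$ is connected, loops and multiple edges allowed. A divisor is $D=\sum_{x\in V(G)}D(x)[x]$, $D(x)\in{\mathbb{Z}}$; effective if all $D(x)\ge0$. A rational function is $f:V(G)\to{\mathbb{Z}}$; $\mathrm{ord}_x(f)=\sum_{e=\overline{xy}\in E(G)}(f(y)-f(x))$, $\mathrm{div}(f)=\sum_x\mathrm{ord}_x(f)[x]$. $R(G,D)=\{f: D+\mathrm{div}(f)\ge0\}$. The direct sum $\bigoplus_m R(G,mD)$ is a graded semi-ring over ${\mathbb{Z}}^{\mathrm{trop}}=({\mathbb{Z}},\max,+)$ with sum $\max$ in each degree, action $c\odot f=c+f$, product $f\odot g=f+g$ (degrees add). Finitely generated means there are finitely many homogeneous elements such that every homogeneous element is a finite tropical sum of ${\mathbb{Z}}^{\mathrm{trop}}$-multiples of tropical products of them. *)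

theory Defs
  imports "HOL-Library.Multiset"
begin

text \<open>A finite multigraph (loops and multiple edges allowed) on the finite vertex type 'v
  is given by a symmetric edge-multiplicity function w: w x y is the number of edges
  between x and y (w x x the number of loops at x).\<close>

definition symmetric_graph :: "('v \<Rightarrow> 'v \<Rightarrow> nat) \<Rightarrow> bool" where
  "symmetric_graph w \<longleftrightarrow> (\<forall>x y. w x y = w y x)"

definition connected_graph :: "('v \<Rightarrow> 'v \<Rightarrow> nat) \<Rightarrow> bool" where
  "connected_graph w \<longleftrightarrow> (\<forall>x y. (x, y) \<in> {(a, b). w a b > 0}\<^sup>*)"

definition ord_at :: "('v::finite \<Rightarrow> 'v \<Rightarrow> nat) \<Rightarrow> ('v \<Rightarrow> int) \<Rightarrow> 'v \<Rightarrow> int" where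
  "ord_at w f x = (\<Sum>y\<in>UNIV. int (w x y) * (f y - f x))"

definition Rspace :: "('v::finite \<Rightarrow> 'v \<Rightarrow> nat) \<Rightarrow> ('v \<Rightarrow> int) \<Rightarrow> ('v \<Rightarrow> int) set" where
  "Rspace w D = {f. \<forall>x. D x + ord_at w f x \<ge> 0}"

text \<open>Homogeneous elements of the graded semiring: pairs (degree m, f) with f in R(G, mD).\<close>
definition homog :: "('v::finite \<Rightarrow> 'v \<Rightarrow> nat) \<Rightarrow> ('v \<Rightarrow> int) \<Rightarrow> (nat \<times> ('v \<Rightarrow> int)) set" where
  "homog w D = {(m, f). f \<in> Rspace w (\<lambda>x. int m * D x)}"

text \<open>Tropical product of a finite multiset of homogeneous elements: degrees add, functions add.
  The empty product is the unit (degree 0, constant 0).\<close>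
definition trop_prod_deg :: "(nat \<times> ('v \<Rightarrow> int)) multiset \<Rightarrow> nat" where
  "trop_prod_deg M = (\<Sum>g\<in>#M. fst g)"

definition trop_prod_fun :: "(nat \<times> ('v \<Rightarrow> int)) multiset \<Rightarrow> 'v \<Rightarrow> int" where
  "trop_prod_fun M = (\<lambda>x. \<Sum>g\<in>#M. snd g x)"

text \<open>Finitely generated as a graded semiring over Z^trop: finitely many homogeneous generators
  such that every homogeneous element is a finite (nonempty) tropical sum (pointwise max) of
  tropical scalar multiples c \<odot> (product of generators) of the same degree.\<close>
definition fin_gen_graded :: "('v::finite \<Rightarrow> 'v \<Rightarrow> nat) \<Rightarrow> ('v \<Rightarrow> int) \<Rightarrow> bool" where
  "fin_gen_graded w D \<longleftrightarrow>
     (\<exists>S. finite S \<and> S \<subseteq> homog w D \<and>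
        (\<forall>m f. (m, f) \<in> homog w D \<longrightarrow>
           (\<exists>T :: (int \<times> (nat \<times> ('v \<Rightarrow> int)) multiset) list.
               T \<noteq> [] \<and>
               (\<forall>(c, M)\<in>set T. set_mset M \<subseteq> S \<and> trop_prod_deg M = m) \<and>
               (\<forall>x. f x = Max ((\<lambda>(c, M). c + trop_prod_fun M x) ` set T)))))"

end

theory Submission
  imports Defs Complex_Main
begin

lemma nat_subseq_mono:
  fixes s :: "nat \<Rightarrow> nat"
  shows "\<exists>r. strict_mono r \<and> (\<forall>n. s (r n) \<le> s (r (Suc n)))"
proof -
  define mu where "mu a = (LEAST v. \<exists>n>a. s n = v)" for a
  define p where "p a = (SOME n. n > a \<and> s n = mu a)" for a
  have pa: "p a > a \<and> s (p a) = mu a" for a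
  proof -
    have "\<exists>n>a. s n = mu a" unfolding mu_def by (rule LeastI[of _ "s (Suc a)"]) auto
    then show ?thesis unfolding p_def by (rule someI_ex)
  qed
  have mn: "mu a \<le> s n" if "n > a" for a n
    unfolding mu_def using that by (intro Least_le) auto
  define r where "r k = (p ^^ Suc k) 0" for k
  have rs: "r (Suc k) = p (r k)" for k unfolding r_def by simp
  have "strict_mono r" unfolding strict_mono_Suc_iff by (simp add: rs pa)
  moreover have "s (r n) \<le> s (r (Suc n))" for n
  proof (cases n)
    case 0
    have "r 0 = p 0" unfolding r_def by simp
    then show ?thesis using 0 pa[of 0] pa[of "r 0"] rs mn[of 0 "p (r 0)"] by auto
  next
    case (Suc k)
    then show ?thesis using rs pa[of "r k"] pa[of "r (Suc k)"] mn[of "r k" "p (r (Suc k))"] by auto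
  qed
  ultimately show ?thesis by blast
qed

lemma dickson_seq:
  fixes f :: "nat \<Rightarrow> 'k \<Rightarrow> nat"
  assumes "finite K"
  shows "\<exists>r::nat\<Rightarrow>nat. strict_mono r \<and> (\<forall>i j. i \<le> j \<longrightarrow> (\<forall>k\<in>K. f (r i) k \<le> f (r j) k))"
  using assms
proof (induction K arbitrary: f rule: finite_induct)
  case empty
  show ?case by (rule exI[of _ "\<lambda>n::nat. n"]) (simp add: strict_mono_def)
next
  case (insert a K)
  obtain r :: "nat \<Rightarrow> nat" where r: "strict_mono r" "\<forall>i j. i \<le> j \<longrightarrow> (\<forall>k\<in>K. f (r i) k \<le> f (r j) k)"
    using insert.IH by blast
  obtain q :: "nat \<Rightarrow> nat" where q: "strict_mono q" "\<forall>n. f (r (q n)) a \<le> f (r (q (Suc n))) a"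
    using nat_subseq_mono[of "\<lambda>n. f (r n) a"] by blast
  have qa: "f (r (q i)) a \<le> f (r (q j)) a" if "i \<le> j" for i j
    using lift_Suc_mono_le[of "\<lambda>n. f (r (q n)) a", OF q(2)[rule_format] that] .
  have qm: "q i \<le> q j" if "i \<le> j" for i j using q(1) that by (simp add: strict_mono_less_eq)
  have "strict_mono (r \<circ> q)" using r(1) q(1) by (rule strict_mono_o)
  moreover have "\<forall>i j. i \<le> j \<longrightarrow> (\<forall>k\<in>insert a K. f ((r \<circ> q) i) k \<le> f ((r \<circ> q) j) k)"
  proof (intro allI impI ballI)
    fix i j k assume ij: "(i::nat) \<le> j" and k: "k \<in> insert a K"
    show "f ((r \<circ> q) i) k \<le> f ((r \<circ> q) j) k"
    proof (cases "k = a")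
      case True then show ?thesis using qa[OF ij] by simp
    next
      case False then have "k \<in> K" using k by simp
      then show ?thesis using r(2) qm[OF ij] by simp
    qed
  qed
  ultimately show ?case by blast
qed

lemma antichain_finite:
  fixes A :: "('k::finite \<Rightarrow> nat) set"
  assumes "\<And>x y. x \<in> A \<Longrightarrow> y \<in> A \<Longrightarrow> x \<le> y \<Longrightarrow> x = y"
  shows "finite A"
proof (rule ccontr)
  assume "infinite A"
  then have "\<exists>f::nat \<Rightarrow> ('k \<Rightarrow> nat). inj f \<and> range f \<subseteq> A"
    by (simp add: infinite_iff_countable_subset)
  then obtain f :: "nat \<Rightarrow> ('k \<Rightarrow> nat)" where f: "inj f" "range f \<subseteq> A" by blast
  have "finite (UNIV :: 'k set)" by simp
  from dickson_seq[OF this, of f] obtain r :: "nat \<Rightarrow> nat" where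
    r: "strict_mono r" "\<forall>i j. i \<le> j \<longrightarrow> (\<forall>k\<in>UNIV. f (r i) k \<le> f (r j) k)" by blast
  have "f (r 0) \<le> f (r 1)" using r(2) unfolding le_fun_def by simp
  moreover have "f (r 0) \<in> A" "f (r 1) \<in> A" using f(2) by auto
  ultimately have "f (r 0) = f (r 1)" using assms by blast
  then have "r 0 = r 1" using f(1) by (simp add: inj_eq)
  moreover have "r 0 < r 1" using r(1) by (simp add: strict_mono_def)
  ultimately show False by simp
qed

definition padd :: "nat \<times> ('v \<Rightarrow> int) \<Rightarrow> nat \<times> ('v \<Rightarrow> int) \<Rightarrow> nat \<times> ('v \<Rightarrow> int)" where
  "padd x y = (fst x + fst y, \<lambda>v. snd x v + snd y v)"
definition pdiff :: "nat \<times> ('v \<Rightarrow> int) \<Rightarrow> nat \<times> ('v \<Rightarrow> int) \<Rightarrow> nat \<times> ('v \<Rightarrow> int)" where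
  "pdiff x y = (fst x - fst y, \<lambda>v. snd x v - snd y v)"
definition phi :: "('v::finite \<Rightarrow> 'v \<Rightarrow> nat) \<Rightarrow> ('v \<Rightarrow> int) \<Rightarrow> nat \<times> ('v \<Rightarrow> int) \<Rightarrow> 'v option \<Rightarrow> nat" where
  "phi w D x k = (case k of None \<Rightarrow> fst x | Some v \<Rightarrow> nat (int (fst x) * D v + ord_at w (snd x) v))"
definition Pset :: "('v::finite \<Rightarrow> 'v \<Rightarrow> nat) \<Rightarrow> ('v \<Rightarrow> int) \<Rightarrow> 'v \<Rightarrow> (nat \<times> ('v \<Rightarrow> int)) set" where
  "Pset w D v0 = {x. x \<in> homog w D \<and> snd x v0 = 0}"

lemma homog_iff: "x \<in> homog w D \<longleftrightarrow> (\<forall>v. 0 \<le> int (fst x) * D v + ord_at w (snd x) v)"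
  by (cases x) (auto simp: homog_def Rspace_def)

lemma ord_add: "ord_at w (\<lambda>v. f v + g v) x = ord_at w f x + ord_at w g x"
  unfolding ord_at_def by (simp add: sum.distrib[symmetric] algebra_simps)
lemma ord_diff: "ord_at w (\<lambda>v. f v - g v) x = ord_at w f x - ord_at w g x"
  unfolding ord_at_def by (simp add: sum_subtractf[symmetric] algebra_simps)
lemma ord_shift: "ord_at w (\<lambda>v. f v - c) x = ord_at w f x"
  unfolding ord_at_def by (simp add: algebra_simps)

lemma harmonic_const:
  assumes conn: "connected_graph w" and h: "\<And>x. ord_at w h x = 0"
  shows "h a = h b"
proof -
  define M where "M = Max (range h)"
  have le: "h y \<le> M" for y unfolding M_def by simp
  have "M \<in> range h" unfolding M_def by (rule Max_in) auto
  then obtain x0 where x0: "h x0 = M" by auto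
  have all: "h y = M" for y
  proof -
    have "(x0, y) \<in> {(a, b). w a b > 0}\<^sup>*" using conn unfolding connected_graph_def by blast
    then show ?thesis
    proof (induction rule: rtrancl_induct)
      case base then show ?case using x0 .
    next
      case (step y z)
      define F where "F u = - (int (w y u) * (h u - h y))" for u
      have s0: "sum F UNIV = - ord_at w h y" unfolding ord_at_def F_def by (simp add: sum_negf)
      have nn: "0 \<le> F u" for u
      proof -
        have "h u - h y \<le> 0" using le[of u] step.IH by simp
        moreover have "0 \<le> int (w y u)" by simp
        ultimately have "int (w y u) * (h u - h y) \<le> 0" using mult_nonneg_nonpos by blast
        then show ?thesis unfolding F_def by simp
      qed
      have "sum F UNIV = 0" using s0 h[of y] by simp
      then have "\<forall>u\<in>UNIV. F u = 0" using sum_nonneg_eq_0_iff[of UNIV F] nn by simp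
      then have "int (w y z) * (h z - h y) = 0" unfolding F_def by simp
      moreover have "w y z > 0" using step(2) by simp
      ultimately show ?case using step.IH by simp
    qed
  qed
  show ?thesis using all[of a] all[of b] by simp
qed

lemma padd_P: assumes "x \<in> Pset w D v0" "y \<in> Pset w D v0" shows "padd x y \<in> Pset w D v0"
proof -
  have "0 \<le> int (fst x) * D v + ord_at w (snd x) v" "0 \<le> int (fst y) * D v + ord_at w (snd y) v" for v
    using assms unfolding Pset_def homog_iff by auto
  then have "0 \<le> int (fst x + fst y) * D v + ord_at w (\<lambda>u. snd x u + snd y u) v" for v
    by (simp add: ord_add algebra_simps) (metis add.assoc add.left_commute add_nonneg_nonneg)
  then show ?thesis using assms unfolding Pset_def homog_iff padd_def by auto
qed

lemma phi_add: assumes "x \<in> Pset w D v0" "y \<in> Pset w D v0"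
  shows "phi w D (padd x y) = (\<lambda>k. phi w D x k + phi w D y k)"
proof
  fix k show "phi w D (padd x y) k = phi w D x k + phi w D y k"
  proof (cases k)
    case None then show ?thesis by (simp add: phi_def padd_def)
  next
    case (Some v)
    have "0 \<le> int (fst x) * D v + ord_at w (snd x) v" "0 \<le> int (fst y) * D v + ord_at w (snd y) v"
      using assms unfolding Pset_def homog_iff by auto
    have "int (fst x + fst y) * D v + ord_at w (\<lambda>u. snd x u + snd y u) v
       = (int (fst x) * D v + ord_at w (snd x) v) + (int (fst y) * D v + ord_at w (snd y) v)"
      by (simp add: ord_add algebra_simps)
    then have "nat (int (fst x + fst y) * D v + ord_at w (\<lambda>u. snd x u + snd y u) v)
       = nat (int (fst x) * D v + ord_at w (snd x) v) + nat (int (fst y) * D v + ord_at w (snd y) v)"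
      using \<open>0 \<le> int (fst x) * D v + ord_at w (snd x) v\<close> \<open>0 \<le> int (fst y) * D v + ord_at w (snd y) v\<close>
      by (simp only: nat_add_distrib)
    moreover have "phi w D (padd x y) k = nat (int (fst x + fst y) * D v + ord_at w (\<lambda>u. snd x u + snd y u) v)"
      using Some by (simp only: phi_def padd_def option.case fst_conv snd_conv)
    moreover have "phi w D x k = nat (int (fst x) * D v + ord_at w (snd x) v)"
      using Some by (simp only: phi_def option.case)
    moreover have "phi w D y k = nat (int (fst y) * D v + ord_at w (snd y) v)"
      using Some by (simp only: phi_def option.case)
    ultimately show ?thesis by simp
  qed
qed

lemma phi_le: assumes "x \<in> Pset w D v0" "y \<in> Pset w D v0" "phi w D x \<le> phi w D y"
  shows "pdiff y x \<in> Pset w D v0" "padd x (pdiff y x) = y"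
proof -
  have "phi w D x None \<le> phi w D y None" using assms(3) by (simp add: le_fun_def)
  then have m: "fst x \<le> fst y" by (simp add: phi_def)
  have "0 \<le> int (fst (pdiff y x)) * D v + ord_at w (snd (pdiff y x)) v" for v
  proof -
    have a: "0 \<le> int (fst x) * D v + ord_at w (snd x) v" "0 \<le> int (fst y) * D v + ord_at w (snd y) v"
      using assms unfolding Pset_def homog_iff by auto
    have "phi w D x (Some v) \<le> phi w D y (Some v)" using assms(3) by (simp add: le_fun_def)
    then have "nat (int (fst x) * D v + ord_at w (snd x) v) \<le> nat (int (fst y) * D v + ord_at w (snd y) v)"
      by (simp only: phi_def option.case)
    then have "int (fst x) * D v + ord_at w (snd x) v \<le> int (fst y) * D v + ord_at w (snd y) v"
      using a by linarith
    then show ?thesis using m by (simp add: pdiff_def ord_diff of_nat_diff algebra_simps)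
  qed
  then show "pdiff y x \<in> Pset w D v0" using assms unfolding Pset_def homog_iff pdiff_def by auto
  show "padd x (pdiff y x) = y" using m by (simp add: padd_def pdiff_def prod_eq_iff)
qed

lemma phi_inj: assumes "connected_graph w" shows "inj_on (phi w D) (Pset w D v0)"
proof (rule inj_onI)
  fix x y assume xy: "x \<in> Pset w D v0" "y \<in> Pset w D v0" "phi w D x = phi w D y"
  have "phi w D x None = phi w D y None" using xy(3) by simp
  then have m: "fst x = fst y" by (simp add: phi_def)
  have "ord_at w (\<lambda>u. snd x u - snd y u) v = 0" for v
  proof -
    have a: "0 \<le> int (fst x) * D v + ord_at w (snd x) v" "0 \<le> int (fst y) * D v + ord_at w (snd y) v"
      using xy unfolding Pset_def homog_iff by auto
    have "phi w D x (Some v) = phi w D y (Some v)" using xy(3) by simp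
    then have "nat (int (fst x) * D v + ord_at w (snd x) v) = nat (int (fst y) * D v + ord_at w (snd y) v)"
      by (simp only: phi_def option.case)
    then show ?thesis using a m by (simp add: ord_diff)
  qed
  then have "snd x u - snd y u = snd x v0 - snd y v0" for u
    by (rule harmonic_const[OF assms])
  then have "snd x = snd y" using xy unfolding Pset_def by auto
  then show "x = y" using m by (simp add: prod_eq_iff)
qed

lemma phi_zero: "phi w D (0, \<lambda>_. 0) = (\<lambda>_. 0)"
  by (auto simp: phi_def ord_at_def split: option.splits)

lemma zero_P: "(0, \<lambda>_. 0) \<in> Pset w D v0"
  by (simp add: Pset_def homog_iff ord_at_def)

lemma padd_zero: "padd x (0, \<lambda>_. 0) = x"
  by (simp add: padd_def)

definition S0 :: "('v::finite \<Rightarrow> 'v \<Rightarrow> nat) \<Rightarrow> ('v \<Rightarrow> int) \<Rightarrow> 'v \<Rightarrow> (nat \<times> ('v \<Rightarrow> int)) set" where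
  "S0 w D v0 = {x \<in> Pset w D v0. x \<noteq> (0, \<lambda>_. 0) \<and>
     \<not> (\<exists>y\<in>Pset w D v0. \<exists>z\<in>Pset w D v0. y \<noteq> (0, \<lambda>_. 0) \<and> z \<noteq> (0, \<lambda>_. 0) \<and> x = padd y z)}"

lemma S0_finite: assumes "connected_graph w" shows "finite (S0 w D v0)"
proof -
  have inj: "inj_on (phi w D) (S0 w D v0)"
    using phi_inj[OF assms] by (rule inj_on_subset) (auto simp: S0_def)
  have "finite (phi w D ` S0 w D v0)"
  proof (rule antichain_finite)
    fix a b assume ab: "a \<in> phi w D ` S0 w D v0" "b \<in> phi w D ` S0 w D v0" "a \<le> b"
    then obtain x y where xy: "x \<in> S0 w D v0" "y \<in> S0 w D v0" "a = phi w D x" "b = phi w D y" by blast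
    have P: "x \<in> Pset w D v0" "y \<in> Pset w D v0" using xy by (auto simp: S0_def)
    note d = phi_le[OF P ab(3)[unfolded xy]]
    show "a = b"
    proof (cases "pdiff y x = (0, \<lambda>_. 0)")
      case True then show ?thesis using d(2) xy by (simp add: padd_zero)
    next
      case False
      have "x \<noteq> (0, \<lambda>_. 0)" using xy by (simp add: S0_def)
      then have "\<exists>y'\<in>Pset w D v0. \<exists>z\<in>Pset w D v0. y' \<noteq> (0, \<lambda>_. 0) \<and> z \<noteq> (0, \<lambda>_. 0) \<and> y = padd y' z"
        using P(1) d(1) d(2) False by metis
      with xy(2) have False unfolding S0_def by blast
      then show ?thesis ..
    qed
  qed
  then show ?thesis using inj by (rule finite_imageD)
qed

lemma decomp:
  assumes conn: "connected_graph w"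
  shows "x \<in> Pset w D v0 \<Longrightarrow> \<exists>M. set_mset M \<subseteq> S0 w D v0 \<and> trop_prod_deg M = fst x \<and> trop_prod_fun M = snd x"
proof (induction "sum (phi w D x) UNIV" arbitrary: x rule: less_induct)
  case less
  show ?case
  proof (cases "x = (0, \<lambda>_. 0)")
    case True then show ?thesis
      by (intro exI[of _ "{#}"]) (auto simp: trop_prod_deg_def trop_prod_fun_def)
  next
    case nz: False
    show ?thesis
    proof (cases "x \<in> S0 w D v0")
      case True then show ?thesis
        by (intro exI[of _ "{#x#}"]) (auto simp: trop_prod_deg_def trop_prod_fun_def)
    next
      case False
      then obtain y z where yz: "y \<in> Pset w D v0" "z \<in> Pset w D v0" "y \<noteq> (0, \<lambda>_. 0)"
        "z \<noteq> (0, \<lambda>_. 0)" "x = padd y z"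
        using less.prems nz unfolding S0_def by blast
      have ph: "phi w D x = (\<lambda>k. phi w D y k + phi w D z k)" using phi_add[OF yz(1,2)] yz(5) by simp
      have pos: "0 < sum (phi w D u) UNIV" if "u \<in> Pset w D v0" "u \<noteq> (0, \<lambda>_. 0)" for u
      proof (rule ccontr)
        assume "\<not> 0 < sum (phi w D u) UNIV"
        then have "phi w D u = phi w D (0, \<lambda>_. 0)" by (auto simp: phi_zero)
        then have "u = (0, \<lambda>_. 0)" using inj_onD[OF phi_inj[OF conn] _ that(1) zero_P] by blast
        then show False using that by simp
      qed
      have sx: "sum (phi w D x) UNIV = sum (phi w D y) UNIV + sum (phi w D z) UNIV"
        unfolding ph by (simp add: sum.distrib)
      have ly: "sum (phi w D y) UNIV < sum (phi w D x) UNIV" using sx pos[OF yz(2,4)] by linarith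
      have lz: "sum (phi w D z) UNIV < sum (phi w D x) UNIV" using sx pos[OF yz(1,3)] by linarith
      obtain My where My: "set_mset My \<subseteq> S0 w D v0" "trop_prod_deg My = fst y" "trop_prod_fun My = snd y"
        using less.hyps[OF ly yz(1)] by blast
      obtain Mz where Mz: "set_mset Mz \<subseteq> S0 w D v0" "trop_prod_deg Mz = fst z" "trop_prod_fun Mz = snd z"
        using less.hyps[OF lz yz(2)] by blast
      show ?thesis
      proof (intro exI[of _ "My + Mz"] conjI)
        show "set_mset (My + Mz) \<subseteq> S0 w D v0" using My Mz by auto
        show "trop_prod_deg (My + Mz) = fst x" using My Mz yz(5)
          by (simp add: trop_prod_deg_def padd_def)
        show "trop_prod_fun (My + Mz) = snd x" using My Mz yz(5)
          by (auto simp: trop_prod_fun_def padd_def fun_eq_iff)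
      qed
    qed
  qed
qed

theorem theorem3p7:
  fixes w :: "'v::finite \<Rightarrow> 'v \<Rightarrow> nat" and D :: "'v \<Rightarrow> int"
  assumes "symmetric_graph w" and "connected_graph w"
  shows "fin_gen_graded w D"
proof -
  define v0 :: 'v where "v0 = undefined"
  have sub: "S0 w D v0 \<subseteq> homog w D" by (auto simp: S0_def Pset_def)
  have rep: "\<exists>T :: (int \<times> (nat \<times> ('v \<Rightarrow> int)) multiset) list.
               T \<noteq> [] \<and>
               (\<forall>(c, M)\<in>set T. set_mset M \<subseteq> S0 w D v0 \<and> trop_prod_deg M = m) \<and>
               (\<forall>x. f x = Max ((\<lambda>(c, M). c + trop_prod_fun M x) ` set T))"
    if mf: "(m, f) \<in> homog w D" for m f
  proof -
    define g where "g = (\<lambda>v. f v - f v0)"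
    have "(m, g) \<in> Pset w D v0"
      using mf unfolding Pset_def homog_iff g_def by (simp add: ord_shift)
    then obtain M where M: "set_mset M \<subseteq> S0 w D v0" "trop_prod_deg M = m" "trop_prod_fun M = g"
      using decomp[OF assms(2), of "(m, g)"] by auto
    show ?thesis
      by (intro exI[of _ "[(f v0, M)]"]) (auto simp: M g_def)
  qed
  show ?thesis unfolding fin_gen_graded_def
    using S0_finite[OF assms(2)] sub rep by blast
qed

end
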